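(* Let $X$ be a $T_1$ space and $\mathcal{P}$ an ideal of closed subsets of $X$. Then $X$ is $\tau\mathcal{P}$-compact if and only if $X$ is both $\tau\mathcal{P}$-pseudocompact and $\tau\mathcal{P}$-real compact.
   Context: An ideal of closed subsets of $X$ is a family $\mathcal{P}$ of closed subsets closed under finite unions and under passing to closed subsets. $D_f$ is the set of discontinuity points of $f\in\mathbb{R}^X$; $C(X)_\mathcal{P}=\{f\in\mathbb{R}^X\colon\overline{D_f}\in\mathcal{P}\}$ (a ring under pointwise operations), $C^*(X)_\mathcal{P}$ its bounded members. For $f\in C(X)_\mathcal{P}$, $Z_\mathcal{P}(f)=\{x\colon f(x)=0\}$, $Z_\mathcal{P}[X]$ the set of all such sets, and for $I\subseteq C(X)_\mathcal{P}$, $Z_\mathcal{P}[I]=\{Z_\mathcal{P}(f)\colon f\in I\}$. $X$ is $\tau\mathcal{P}$-compact if every subfamily of $Z_\mathcal{P}[X]$ with the finite intersection property has nonempty intersection; $\tau\mathcal{P}$-pseudocompact if $C(X)_\mathcal{P}=C^*(X)_\mathcal{P}$. A maximal ideal $M$ of $C(X)_\mathcal{P}$ is real if $C(X)_\mathcal{P}/M$ is isomorphic to $\mathbb{R}$; an ideal $I$ is fixed if $\bigcap Z_\mathcal{P}[I]\neq\emptyset$. $X$ is $\tau\mathcal{P}$-real compact if every real maximal ideal of $C(X)_\mathcal{P}$ is fixed. *)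

theory Defs
  imports "HOL-Analysis.Analysis" "HOL-Algebra.QuotRing"
begin

definition cont_at :: "'a topology \<Rightarrow> ('a \<Rightarrow> real) \<Rightarrow> 'a \<Rightarrow> bool" where
  "cont_at X f x \<longleftrightarrow> (\<forall>V. open V \<and> f x \<in> V \<longrightarrow>
      (\<exists>U. openin X U \<and> x \<in> U \<and> f ` U \<subseteq> V))"

definition disc_pts :: "'a topology \<Rightarrow> ('a \<Rightarrow> real) \<Rightarrow> 'a set" where
  "disc_pts X f = {x \<in> topspace X. \<not> cont_at X f x}"

definition closed_ideal :: "'a topology \<Rightarrow> 'a set set \<Rightarrow> bool" where
  "closed_ideal X P \<longleftrightarrow> (\<forall>A\<in>P. closedin X A) \<and> {} \<in> P \<and>
     (\<forall>A\<in>P. \<forall>B\<in>P. A \<union> B \<in> P) \<and>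
     (\<forall>A\<in>P. \<forall>B. closedin X B \<and> B \<subseteq> A \<longrightarrow> B \<in> P)"

text \<open>Elements of R^X are represented as functions that vanish outside topspace X.\<close>
definition CP :: "'a topology \<Rightarrow> 'a set set \<Rightarrow> ('a \<Rightarrow> real) set" where
  "CP X P = {f. (\<forall>x. x \<notin> topspace X \<longrightarrow> f x = 0) \<and> X closure_of (disc_pts X f) \<in> P}"

definition CP_bdd :: "'a topology \<Rightarrow> 'a set set \<Rightarrow> ('a \<Rightarrow> real) set" where
  "CP_bdd X P = {f \<in> CP X P. \<exists>B. \<forall>x\<in>topspace X. \<bar>f x\<bar> \<le> B}"

definition CP_ring :: "'a topology \<Rightarrow> 'a set set \<Rightarrow> ('a \<Rightarrow> real) ring" where
  "CP_ring X P = \<lparr>carrier = CP X P,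
     monoid.mult = (\<lambda>f g x. f x * g x),
     one = (\<lambda>x. if x \<in> topspace X then 1 else 0),
     zero = (\<lambda>x. 0),
     add = (\<lambda>f g x. f x + g x)\<rparr>"

definition real_ring :: "real ring" where
  "real_ring = \<lparr>carrier = UNIV, monoid.mult = (*), one = 1, zero = 0, add = (+)\<rparr>"

definition ZP :: "'a topology \<Rightarrow> ('a \<Rightarrow> real) \<Rightarrow> 'a set" where
  "ZP X f = {x \<in> topspace X. f x = 0}"

definition fip :: "'a set set \<Rightarrow> bool" where
  "fip F \<longleftrightarrow> (\<forall>G. G \<subseteq> F \<and> finite G \<and> G \<noteq> {} \<longrightarrow> \<Inter>G \<noteq> {})"

definition tauP_compact :: "'a topology \<Rightarrow> 'a set set \<Rightarrow> bool" where
  "tauP_compact X P \<longleftrightarrow> (\<forall>F. F \<subseteq> ZP X ` CP X P \<and> F \<noteq> {} \<and> fip F \<longrightarrow> \<Inter>F \<noteq> {})"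

definition tauP_pseudocompact :: "'a topology \<Rightarrow> 'a set set \<Rightarrow> bool" where
  "tauP_pseudocompact X P \<longleftrightarrow> CP X P = CP_bdd X P"

definition real_maximal_ideal :: "'a topology \<Rightarrow> 'a set set \<Rightarrow> ('a \<Rightarrow> real) set \<Rightarrow> bool" where
  "real_maximal_ideal X P M \<longleftrightarrow> maximalideal M (CP_ring X P) \<and>
     (CP_ring X P Quot M) \<simeq> real_ring"

definition fixed_ideal :: "'a topology \<Rightarrow> ('a \<Rightarrow> real) set \<Rightarrow> bool" where
  "fixed_ideal X I \<longleftrightarrow> \<Inter>(ZP X ` I) \<noteq> {}"

definition tauP_realcompact :: "'a topology \<Rightarrow> 'a set set \<Rightarrow> bool" where
  "tauP_realcompact X P \<longleftrightarrow> (\<forall>M. real_maximal_ideal X P M \<longrightarrow> fixed_ideal X M)"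

end

theory Submission
  imports Defs
begin
definition lift :: "'a topology \<Rightarrow> ('a \<Rightarrow> real) \<Rightarrow> 'a \<Rightarrow> real" where
  "lift X h = (\<lambda>x. if x \<in> topspace X then h x else 0)"

lemma cont_at_in: "cont_at X f x \<Longrightarrow> x \<in> topspace X"
proof -
  assume "cont_at X f x"
  then obtain U where "openin X U" "x \<in> U" unfolding cont_at_def by blast
  then show ?thesis using openin_subset by blast
qed

lemma cont_at_cong: "cont_at X f x \<Longrightarrow> (\<And>y. y \<in> topspace X \<Longrightarrow> g y = f y) \<Longrightarrow> cont_at X g x"
proof -
  assume c: "cont_at X f x" and e: "\<And>y. y \<in> topspace X \<Longrightarrow> g y = f y"
  have xT: "x \<in> topspace X" using cont_at_in[OF c] .
  show ?thesis unfolding cont_at_def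
  proof (intro allI impI)
    fix V assume "open V \<and> g x \<in> V"
    then obtain U where "openin X U" "x \<in> U" "f ` U \<subseteq> V" using c e[OF xT] unfolding cont_at_def by auto
    then show "\<exists>U. openin X U \<and> x \<in> U \<and> g ` U \<subseteq> V"
      using e openin_subset by (intro exI[of _ U]) fastforce
  qed
qed

lemma cont_at_const: "x \<in> topspace X \<Longrightarrow> (\<And>y. y \<in> topspace X \<Longrightarrow> f y = c) \<Longrightarrow> cont_at X f x"
  unfolding cont_at_def by (intro allI impI exI[of _ "topspace X"]) auto

lemma cont_at_bin:
  assumes cf: "cont_at X f x" and cg: "cont_at X g x"
    and F: "isCont (\<lambda>p::real\<times>real. F (fst p) (snd p)) (f x, g x)"
  shows "cont_at X (\<lambda>y. F (f y) (g y)) x"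
  unfolding cont_at_def
proof (intro allI impI)
  fix V assume V: "open V \<and> F (f x) (g x) \<in> V"
  have H: "\<forall>t. open t \<and> F (f x) (g x) \<in> t \<longrightarrow> (\<exists>s. open s \<and> (f x, g x) \<in> s \<and> (\<forall>p\<in>s. F (fst p) (snd p) \<in> t))"
    using F unfolding continuous_at_open by (simp only: fst_conv snd_conv)
  obtain W where W: "open W" "(f x, g x) \<in> W" "\<forall>p\<in>W. F (fst p) (snd p) \<in> V"
    using H[rule_format, OF V] by (elim exE conjE)
  obtain A B where AB0: "open A" "open B" "(f x, g x) \<in> A \<times> B" "A \<times> B \<subseteq> W"
    by (rule open_prod_elim[OF W(1) W(2)])
  then have AB: "open A" "open B" "f x \<in> A" "g x \<in> B" "A \<times> B \<subseteq> W" by auto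
  have cf': "\<forall>V. open V \<and> f x \<in> V \<longrightarrow> (\<exists>U. openin X U \<and> x \<in> U \<and> f ` U \<subseteq> V)"
    using cf unfolding cont_at_def .
  have cg': "\<forall>V. open V \<and> g x \<in> V \<longrightarrow> (\<exists>U. openin X U \<and> x \<in> U \<and> g ` U \<subseteq> V)"
    using cg unfolding cont_at_def .
  obtain U1 where U1: "openin X U1" "x \<in> U1" "f ` U1 \<subseteq> A"
    using cf'[rule_format, OF conjI[OF AB(1) AB(3)]] by (elim exE conjE)
  obtain U2 where U2: "openin X U2" "x \<in> U2" "g ` U2 \<subseteq> B"
    using cg'[rule_format, OF conjI[OF AB(2) AB(4)]] by (elim exE conjE)
  show "\<exists>U. openin X U \<and> x \<in> U \<and> (\<lambda>y. F (f y) (g y)) ` U \<subseteq> V"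
  proof (intro exI[of _ "U1 \<inter> U2"] conjI)
    show "openin X (U1 \<inter> U2)" using U1(1) U2(1) by (rule openin_Int)
    show "x \<in> U1 \<inter> U2" using U1(2) U2(2) by (rule IntI)
    show "(\<lambda>y. F (f y) (g y)) ` (U1 \<inter> U2) \<subseteq> V"
    proof
      fix z assume "z \<in> (\<lambda>y. F (f y) (g y)) ` (U1 \<inter> U2)"
      then obtain y where y: "y \<in> U1" "y \<in> U2" "z = F (f y) (g y)" by auto
      have "f y \<in> A" using y(1) U1(3) by auto
      moreover have "g y \<in> B" using y(2) U2(3) by auto
      ultimately have "(f y, g y) \<in> W" using AB(5) by auto
      with W(3) have "F (fst (f y, g y)) (snd (f y, g y)) \<in> V" by (rule bspec)
      then show "z \<in> V" using y(3) by simp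
    qed
  qed
qed

lemma disc_bin:
  assumes "\<And>x. x \<in> topspace X \<Longrightarrow> isCont (\<lambda>p::real\<times>real. F (fst p) (snd p)) (f x, g x)"
  shows "disc_pts X (lift X (\<lambda>y. F (f y) (g y))) \<subseteq> disc_pts X f \<union> disc_pts X g"
proof
  fix x assume x: "x \<in> disc_pts X (lift X (\<lambda>y. F (f y) (g y)))"
  then have xT: "x \<in> topspace X" unfolding disc_pts_def by auto
  show "x \<in> disc_pts X f \<union> disc_pts X g"
  proof (rule ccontr)
    assume "x \<notin> disc_pts X f \<union> disc_pts X g"
    then have "cont_at X f x" "cont_at X g x" using xT unfolding disc_pts_def by auto
    then have "cont_at X (\<lambda>y. F (f y) (g y)) x"
      using cont_at_bin[of X f x g F] assms[OF xT] by blast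
    then have "cont_at X (lift X (\<lambda>y. F (f y) (g y))) x" by (rule cont_at_cong) (simp add: lift_def)
    then show False using x unfolding disc_pts_def by auto
  qed
qed

lemma ideal_closed_sub:
  assumes "closed_ideal X P" "A \<in> P" "B \<subseteq> A" "closedin X B" shows "B \<in> P"
  using assms unfolding closed_ideal_def by blast

lemma CP_bin:
  assumes P: "closed_ideal X P" and f: "f \<in> CP X P" and g: "g \<in> CP X P"
    and F: "\<And>x. x \<in> topspace X \<Longrightarrow> isCont (\<lambda>p::real\<times>real. F (fst p) (snd p)) (f x, g x)"
  shows "lift X (\<lambda>y. F (f y) (g y)) \<in> CP X P"
proof -
  have u: "X closure_of disc_pts X f \<union> X closure_of disc_pts X g \<in> P"
    using P f g unfolding closed_ideal_def CP_def by auto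
  have "X closure_of disc_pts X (lift X (\<lambda>y. F (f y) (g y))) \<subseteq> X closure_of (disc_pts X f \<union> disc_pts X g)"
    by (rule closure_of_mono[OF disc_bin[OF F]])
  also have "\<dots> = X closure_of disc_pts X f \<union> X closure_of disc_pts X g" by (rule closure_of_Un)
  finally have "X closure_of disc_pts X (lift X (\<lambda>y. F (f y) (g y))) \<in> P"
    using ideal_closed_sub[OF P u] closedin_closure_of by blast
  then show ?thesis unfolding CP_def by (auto simp: lift_def)
qed

lemma CP_vanish: "f \<in> CP X P \<Longrightarrow> x \<notin> topspace X \<Longrightarrow> f x = 0"
  unfolding CP_def by auto

lemma CP_bin0:
  assumes P: "closed_ideal X P" and f: "f \<in> CP X P" and g: "g \<in> CP X P"
    and F: "\<And>x. x \<in> topspace X \<Longrightarrow> isCont (\<lambda>p::real\<times>real. F (fst p) (snd p)) (f x, g x)"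
    and F0: "F 0 0 = 0"
  shows "(\<lambda>y. F (f y) (g y)) \<in> CP X P"
proof -
  have "lift X (\<lambda>y. F (f y) (g y)) = (\<lambda>y. F (f y) (g y))"
    using CP_vanish[OF f] CP_vanish[OF g] F0 by (auto simp: lift_def)
  then show ?thesis using CP_bin[OF P f g F] by simp
qed

lemma CP_un:
  assumes P: "closed_ideal X P" and f: "f \<in> CP X P"
    and F: "\<And>x. x \<in> topspace X \<Longrightarrow> isCont F (f x)"
  shows "lift X (\<lambda>y. F (f y)) \<in> CP X P"
proof -
  have "isCont (\<lambda>p::real\<times>real. F (fst p)) (f x, f x)" if "x \<in> topspace X" for x
    using isCont_o2[of "(f x, f x)" fst F] isCont_fst[OF continuous_ident] F[OF that] by simp
  then show ?thesis using CP_bin[OF P f f, of "\<lambda>a b. F a"] by simp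
qed

lemma CP_const: assumes P: "closed_ideal X P" shows "lift X (\<lambda>_. c) \<in> CP X P"
proof -
  have "cont_at X (lift X (\<lambda>_. c)) x" if "x \<in> topspace X" for x
    by (rule cont_at_const[OF that]) (simp add: lift_def)
  then have "disc_pts X (lift X (\<lambda>_. c)) = {}"
    unfolding disc_pts_def by blast
  then show ?thesis using P unfolding CP_def closed_ideal_def by (auto simp: lift_def)
qed

lemma CP_zero: "closed_ideal X P \<Longrightarrow> (\<lambda>_. 0) \<in> CP X P"
  using CP_const[of X P 0] by (simp add: lift_def)

lemma CP_add: "closed_ideal X P \<Longrightarrow> f \<in> CP X P \<Longrightarrow> g \<in> CP X P \<Longrightarrow> (\<lambda>x. f x + g x) \<in> CP X P"
  by (rule CP_bin0, assumption+, intro continuous_intros, simp)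

lemma CP_mult: "closed_ideal X P \<Longrightarrow> f \<in> CP X P \<Longrightarrow> g \<in> CP X P \<Longrightarrow> (\<lambda>x. f x * g x) \<in> CP X P"
  by (rule CP_bin0, assumption+, intro continuous_intros, simp)

lemma CP_diff: "closed_ideal X P \<Longrightarrow> f \<in> CP X P \<Longrightarrow> g \<in> CP X P \<Longrightarrow> (\<lambda>x. f x - g x) \<in> CP X P"
  by (rule CP_bin0, assumption+, intro continuous_intros, simp)

lemma CP_uminus: "closed_ideal X P \<Longrightarrow> f \<in> CP X P \<Longrightarrow> (\<lambda>x. - f x) \<in> CP X P"
  using CP_diff[of X P "\<lambda>_. 0" f] CP_zero by auto

lemma CP_one: "closed_ideal X P \<Longrightarrow> one (CP_ring X P) \<in> CP X P"
  using CP_const[of X P 1] by (simp add: lift_def CP_ring_def)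

lemma CP_cring: assumes P: "closed_ideal X P" shows "cring (CP_ring X P)"
proof (rule cringI)
  show "abelian_group (CP_ring X P)"
  proof (rule abelian_groupI)
    fix x assume x: "x \<in> carrier (CP_ring X P)"
    then show "\<exists>y\<in>carrier (CP_ring X P). y \<oplus>\<^bsub>CP_ring X P\<^esub> x = \<zero>\<^bsub>CP_ring X P\<^esub>"
      using CP_uminus[OF P] by (intro bexI[of _ "\<lambda>y. - x y"]) (auto simp: CP_ring_def)
  qed (auto simp: CP_ring_def CP_add[OF P] CP_zero[OF P] algebra_simps)
  show "comm_monoid (CP_ring X P)"
  proof (rule comm_monoidI)
    fix x assume "x \<in> carrier (CP_ring X P)"
    then show "\<one>\<^bsub>CP_ring X P\<^esub> \<otimes>\<^bsub>CP_ring X P\<^esub> x = x"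
      using CP_vanish[of x X P] by (auto simp: CP_ring_def)
  qed (auto simp: CP_ring_def CP_mult[OF P] CP_one[OF P, unfolded CP_ring_def, simplified] algebra_simps)
qed (auto simp: CP_ring_def algebra_simps)

lemma real_ring_cring: "cring real_ring"
proof (rule cringI)
  show "abelian_group real_ring"
    by (rule abelian_groupI) (auto simp: real_ring_def algebra_simps intro: exI[of _ "- x" for x])
  show "comm_monoid real_ring"
    by (rule comm_monoidI) (auto simp: real_ring_def algebra_simps)
qed (auto simp: real_ring_def algebra_simps)

definition pideal :: "'a topology \<Rightarrow> 'a set set \<Rightarrow> ('a \<Rightarrow> real) set \<Rightarrow> bool" where
  "pideal X P J \<longleftrightarrow> J \<subseteq> CP X P \<and> (\<lambda>_. 0) \<in> J \<and> (\<forall>a\<in>J. \<forall>b\<in>J. (\<lambda>x. a x + b x) \<in> J)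
     \<and> (\<forall>a\<in>J. \<forall>r\<in>CP X P. (\<lambda>x. r x * a x) \<in> J)"

lemma pideal_add: "pideal X P J \<Longrightarrow> a \<in> J \<Longrightarrow> b \<in> J \<Longrightarrow> (\<lambda>x. a x + b x) \<in> J"
  unfolding pideal_def by (elim conjE) (drule bspec, assumption, drule bspec, assumption)

lemma pideal_mult: "pideal X P J \<Longrightarrow> a \<in> J \<Longrightarrow> r \<in> CP X P \<Longrightarrow> (\<lambda>x. r x * a x) \<in> J"
  unfolding pideal_def by (elim conjE) (drule bspec, assumption, drule bspec, assumption)

lemma pideal_sub: "pideal X P J \<Longrightarrow> a \<in> J \<Longrightarrow> a \<in> CP X P"
  unfolding pideal_def by blast

lemma pideal_zero: "pideal X P J \<Longrightarrow> (\<lambda>_. 0) \<in> J"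
  unfolding pideal_def by blast

lemma one_CP: "one (CP_ring X P) = lift X (\<lambda>_. 1)"
  by (simp add: CP_ring_def lift_def)

lemma ideal_pideal: assumes "ideal J (CP_ring X P)" shows "pideal X P J"
proof -
  interpret ideal J "CP_ring X P" by fact
  show ?thesis unfolding pideal_def
  proof (intro conjI ballI)
    show "J \<subseteq> CP X P" using a_subset by (simp add: CP_ring_def)
    show "(\<lambda>_. 0) \<in> J" using additive_subgroup.zero_closed[OF is_additive_subgroup] by (simp add: CP_ring_def)
    fix a assume a: "a \<in> J"
    { fix b assume "b \<in> J" then show "(\<lambda>x. a x + b x) \<in> J" using additive_subgroup.a_closed[OF is_additive_subgroup a] by (simp add: CP_ring_def) }
    { fix r assume "r \<in> CP X P" then show "(\<lambda>x. r x * a x) \<in> J" using I_l_closed[OF a] by (simp add: CP_ring_def) }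
  qed
qed

lemma neg_eq_mult: "f \<in> CP X P \<Longrightarrow> (\<lambda>x. lift X (\<lambda>_. -1) x * f x) = (\<lambda>x. - f x)"
  using CP_vanish[of f X P] by (auto simp: lift_def)

lemma pideal_neg: "closed_ideal X P \<Longrightarrow> pideal X P J \<Longrightarrow> a \<in> J \<Longrightarrow> (\<lambda>x. - a x) \<in> J"
proof -
  assume P: "closed_ideal X P" and J: "pideal X P J" and a: "a \<in> J"
  have "a \<in> CP X P" using J a by (auto simp: pideal_def)
  have "(\<lambda>x. lift X (\<lambda>_. -1) x * a x) \<in> J" by (rule pideal_mult[OF J a CP_const[OF P]])
  then show ?thesis using neg_eq_mult[OF \<open>a \<in> CP X P\<close>] by simp
qed

lemma pideal_diff: "closed_ideal X P \<Longrightarrow> pideal X P J \<Longrightarrow> a \<in> J \<Longrightarrow> b \<in> J \<Longrightarrow> (\<lambda>x. a x - b x) \<in> J"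
proof -
  assume P: "closed_ideal X P" and J: "pideal X P J" and a: "a \<in> J" and b: "b \<in> J"
  have "(\<lambda>x. - b x) \<in> J" by (rule pideal_neg[OF P J b])
  then have "(\<lambda>x. a x + - b x) \<in> J" by (rule pideal_add[OF J a])
  then show ?thesis by simp
qed

lemma pideal_ideal: assumes P: "closed_ideal X P" and J: "pideal X P J" shows "ideal J (CP_ring X P)"
proof -
  have cr: "cring (CP_ring X P)" by (rule CP_cring[OF P])
  then interpret cring "CP_ring X P" .
  show ?thesis
  proof (rule idealI)
    show "ring (CP_ring X P)" by (rule cring.axioms(1)[OF cr])
    show "subgroup J (add_monoid (CP_ring X P))"
    proof (rule subgroup.intro)
      show "J \<subseteq> carrier (add_monoid (CP_ring X P))" using J by (simp add: pideal_def CP_ring_def)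
      show "\<And>x y. x \<in> J \<Longrightarrow> y \<in> J \<Longrightarrow> x \<otimes>\<^bsub>add_monoid (CP_ring X P)\<^esub> y \<in> J"
        using J by (simp add: pideal_def CP_ring_def)
      show "\<one>\<^bsub>add_monoid (CP_ring X P)\<^esub> \<in> J" using J by (simp add: pideal_def CP_ring_def)
      fix x assume x: "x \<in> J"
      have xc: "x \<in> carrier (CP_ring X P)" using J x by (auto simp: pideal_def CP_ring_def)
      have nc: "(\<lambda>y. - x y) \<in> carrier (CP_ring X P)" using CP_uminus[OF P] xc by (simp add: CP_ring_def)
      have "\<ominus>\<^bsub>CP_ring X P\<^esub> x = (\<lambda>y. - x y)"
        by (rule minus_equality[OF _ xc nc]) (simp add: CP_ring_def)
      moreover have "(\<lambda>y. - x y) \<in> J" by (rule pideal_neg[OF P J x])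
      ultimately show "inv\<^bsub>add_monoid (CP_ring X P)\<^esub> x \<in> J" by (simp add: a_inv_def)
    qed
    fix a x assume a: "a \<in> J" and x: "x \<in> carrier (CP_ring X P)"
    show "x \<otimes>\<^bsub>CP_ring X P\<^esub> a \<in> J" using J a x by (simp add: pideal_def CP_ring_def)
    have "a \<otimes>\<^bsub>CP_ring X P\<^esub> x = x \<otimes>\<^bsub>CP_ring X P\<^esub> a" by (simp add: CP_ring_def mult.commute)
    then show "a \<otimes>\<^bsub>CP_ring X P\<^esub> x \<in> J" using J a x by (simp add: pideal_def CP_ring_def)
  qed
qed

lemma CP_inv:
  assumes P: "closed_ideal X P" and f: "f \<in> CP X P" and Z: "ZP X f = {}"
  shows "lift X (\<lambda>x. 1 / f x) \<in> CP X P" "(\<lambda>x. lift X (\<lambda>x. 1 / f x) x * f x) = lift X (\<lambda>_. 1)"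
proof -
  have nz: "f x \<noteq> 0" if "x \<in> topspace X" for x using Z that unfolding ZP_def by auto
  show "lift X (\<lambda>x. 1 / f x) \<in> CP X P"
    by (rule CP_un[OF P f]) (intro continuous_intros, simp add: nz)
  show "(\<lambda>x. lift X (\<lambda>x. 1 / f x) x * f x) = lift X (\<lambda>_. 1)"
    using nz by (auto simp: lift_def)
qed

definition one1 :: "'a topology \<Rightarrow> 'a \<Rightarrow> real" where "one1 X = lift X (\<lambda>_. 1)"

lemma proper_ZP:
  assumes P: "closed_ideal X P" and J: "pideal X P J" and one: "one1 X \<notin> J" and f: "f \<in> J"
  shows "ZP X f \<noteq> {}"
proof
  assume Z: "ZP X f = {}"
  have fc: "f \<in> CP X P" using J f by (auto simp: pideal_def)
  have "(\<lambda>x. lift X (\<lambda>x. 1 / f x) x * f x) \<in> J"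
    by (rule pideal_mult[OF J f CP_inv(1)[OF P fc Z]])
  then show False using CP_inv(2)[OF P fc Z] one by (simp add: one1_def)
qed

lemma ZP_sq: "ZP X (\<lambda>x. f x * f x + g x * g x) = ZP X f \<inter> ZP X g"
  unfolding ZP_def by (auto simp: add_nonneg_eq_0_iff)

lemma pideal_sq:
  assumes J: "pideal X P J" and f: "f \<in> J" and g: "g \<in> J"
  shows "(\<lambda>x. f x * f x + g x * g x) \<in> J"
proof -
  have "(\<lambda>x. f x * f x) \<in> J" by (rule pideal_mult[OF J f pideal_sub[OF J f]])
  moreover have "(\<lambda>x. g x * g x) \<in> J" by (rule pideal_mult[OF J g pideal_sub[OF J g]])
  ultimately show ?thesis using pideal_add[OF J] by blast
qed

lemma pideal_fin:
  assumes J: "pideal X P J"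
  shows "finite G \<Longrightarrow> G \<noteq> {} \<Longrightarrow> G \<subseteq> ZP X ` J \<Longrightarrow> \<exists>h\<in>J. ZP X h = \<Inter>G"
proof (induction G rule: finite_ne_induct)
  case (singleton x) then show ?case by auto
next
  case (insert x F)
  then obtain h where h: "h \<in> J" "ZP X h = \<Inter>F" by auto
  obtain f where f: "f \<in> J" "x = ZP X f" using insert.prems by auto
  have "ZP X (\<lambda>x. f x * f x + h x * h x) = \<Inter>(insert x F)"
    using ZP_sq[of X f h] h(2) f(2) by simp
  then show ?case
    using pideal_sq[OF J f(1) h(1)] by blast
qed

lemma pideal_fip:
  assumes P: "closed_ideal X P" and J: "pideal X P J" and one: "one1 X \<notin> J"
  shows "fip (ZP X ` J)"
  unfolding fip_def
proof (intro allI impI)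
  fix G assume "G \<subseteq> ZP X ` J \<and> finite G \<and> G \<noteq> {}"
  then obtain h where "h \<in> J" "ZP X h = \<Inter>G" using pideal_fin[OF J] by blast
  then show "\<Inter>G \<noteq> {}" using proper_ZP[OF P J one, of h] by simp
qed

abbreviation cst :: "'a topology \<Rightarrow> real \<Rightarrow> 'a \<Rightarrow> real" where "cst X r \<equiv> lift X (\<lambda>_. r)"

context
  fixes X :: "'a topology" and P M
  assumes P: "closed_ideal X P" and Mi: "pideal X P M" and one: "one1 X \<notin> M"
    and maxl: "\<And>J. pideal X P J \<Longrightarrow> M \<subseteq> J \<Longrightarrow> one1 X \<notin> J \<Longrightarrow> J = M"
begin

lemma one1_CP: "one1 X \<in> CP X P"
  unfolding one1_def by (rule CP_const[OF P])

lemma pm_inv: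
  assumes f: "f \<in> CP X P" and fM: "f \<notin> M"
  shows "\<exists>k\<in>CP X P. (\<lambda>x. f x * k x - one1 X x) \<in> M"
proof -
  define J where "J = {h \<in> CP X P. \<exists>m\<in>M. \<exists>k\<in>CP X P. h = (\<lambda>x. m x + k x * f x)}"
  have JI: "h \<in> J" if "h \<in> CP X P" "m \<in> M" "k \<in> CP X P" "h = (\<lambda>x. m x + k x * f x)" for h m k
    unfolding J_def using that by blast
  have MJ: "M \<subseteq> J"
  proof
    fix m assume m: "m \<in> M"
    have "m = (\<lambda>x. m x + (\<lambda>_. 0) x * f x)" by simp
    then show "m \<in> J" by (rule JI[OF pideal_sub[OF Mi m] m CP_zero[OF P]])
  qed
  have fJ: "f \<in> J"
  proof -
    have "f = (\<lambda>x. (\<lambda>_. 0) x + one1 X x * f x)"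
      using CP_vanish[OF f] by (auto simp: one1_def lift_def)
    then show ?thesis by (rule JI[OF f pideal_zero[OF Mi] one1_CP])
  qed
  have pJ: "pideal X P J"
    unfolding pideal_def
  proof (intro conjI ballI)
    show "J \<subseteq> CP X P" unfolding J_def by blast
    show "(\<lambda>_. 0) \<in> J" using MJ pideal_zero[OF Mi] by blast
    fix a assume "a \<in> J"
    then obtain m k where a: "a \<in> CP X P" "m \<in> M" "k \<in> CP X P" "a = (\<lambda>x. m x + k x * f x)"
      unfolding J_def by blast
    { fix b assume "b \<in> J"
      then obtain m' k' where b: "b \<in> CP X P" "m' \<in> M" "k' \<in> CP X P" "b = (\<lambda>x. m' x + k' x * f x)"
        unfolding J_def by blast
      have e: "(\<lambda>x. a x + b x) = (\<lambda>x. (\<lambda>x. m x + m' x) x + (\<lambda>x. k x + k' x) x * f x)"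
        using a b by (auto simp: algebra_simps)
      show "(\<lambda>x. a x + b x) \<in> J"
        by (rule JI[OF CP_add[OF P a(1) b(1)] pideal_add[OF Mi a(2) b(2)] CP_add[OF P a(3) b(3)] e]) }
    { fix r assume r: "r \<in> CP X P"
      have e: "(\<lambda>x. r x * a x) = (\<lambda>x. (\<lambda>x. r x * m x) x + (\<lambda>x. r x * k x) x * f x)"
        using a by (auto simp: algebra_simps)
      show "(\<lambda>x. r x * a x) \<in> J"
        by (rule JI[OF CP_mult[OF P r a(1)] pideal_mult[OF Mi a(2) r] CP_mult[OF P r a(3)] e]) }
  qed
  have "J \<noteq> M" using fJ fM by blast
  then have "one1 X \<in> J" using maxl[OF pJ MJ] by blast
  then obtain m k where mk: "m \<in> M" "k \<in> CP X P" "one1 X = (\<lambda>x. m x + k x * f x)"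
    unfolding J_def by blast
  have "(\<lambda>x. f x * k x - one1 X x) = (\<lambda>x. - m x)"
    using mk(3) by (auto simp: fun_eq_iff algebra_simps)
  then have "(\<lambda>x. f x * k x - one1 X x) \<in> M" using pideal_neg[OF P Mi mk(1)] by simp
  then show ?thesis using mk(2) by blast
qed

lemma pm_z:
  assumes g: "g \<in> M" and h: "h \<in> CP X P" and Z: "ZP X g \<subseteq> ZP X h"
  shows "h \<in> M"
proof (rule ccontr)
  assume "h \<notin> M"
  then obtain k where k: "k \<in> CP X P" and m: "(\<lambda>x. h x * k x - one1 X x) \<in> M"
    using pm_inv[OF h] by blast
  define m' where "m' = (\<lambda>x. h x * k x - one1 X x)"
  have "(\<lambda>x. g x * g x + m' x * m' x) \<in> M" using pideal_sq[OF Mi g] m unfolding m'_def by blast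
  moreover have "ZP X (\<lambda>x. g x * g x + m' x * m' x) = {}"
  proof -
    have "ZP X g \<inter> ZP X m' = {}"
      using Z unfolding ZP_def m'_def one1_def lift_def by auto
    then show ?thesis using ZP_sq[of X g m'] by simp
  qed
  ultimately show False using proper_ZP[OF P Mi one] by blast
qed

lemma pm_prime:
  assumes g: "g \<in> CP X P" and h: "h \<in> CP X P" and gh: "(\<lambda>x. g x * h x) \<in> M" and gM: "g \<notin> M"
  shows "h \<in> M"
proof -
  obtain k where k: "k \<in> CP X P" and m: "(\<lambda>x. g x * k x - one1 X x) \<in> M"
    using pm_inv[OF g gM] by blast
  have a: "(\<lambda>x. k x * (g x * h x)) \<in> M" by (rule pideal_mult[OF Mi gh k])
  have b: "(\<lambda>x. h x * (g x * k x - one1 X x)) \<in> M" by (rule pideal_mult[OF Mi m h])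
  have "(\<lambda>x. k x * (g x * h x) - h x * (g x * k x - one1 X x)) \<in> M" by (rule pideal_diff[OF P Mi a b])
  moreover have "(\<lambda>x. k x * (g x * h x) - h x * (g x * k x - one1 X x)) = h"
    using CP_vanish[OF h] by (auto simp: fun_eq_iff one1_def lift_def algebra_simps)
  ultimately show ?thesis by simp
qed

end

lemma pseudo_bdd: "tauP_pseudocompact X P \<Longrightarrow> f \<in> CP X P \<Longrightarrow> \<exists>B. \<forall>x\<in>topspace X. \<bar>f x\<bar> \<le> B"
  unfolding tauP_pseudocompact_def CP_bdd_def by blast

context
  fixes X :: "'a topology" and P M
  assumes P: "closed_ideal X P" and Mi: "pideal X P M" and one: "one1 X \<notin> M"
    and maxl: "\<And>J. pideal X P J \<Longrightarrow> M \<subseteq> J \<Longrightarrow> one1 X \<notin> J \<Longrightarrow> J = M"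
    and pc: "tauP_pseudocompact X P"
begin

lemma pm_real:
  assumes f: "f \<in> CP X P"
  shows "\<exists>r. (\<lambda>x. f x - cst X r x) \<in> M"
proof -
  obtain B where B: "\<And>x. x \<in> topspace X \<Longrightarrow> \<bar>f x\<bar> \<le> B" using pseudo_bdd[OF pc f] by blast
  define gp where "gp s = lift X (\<lambda>x. max (f x - s) 0)" for s
  define gn where "gn s = lift X (\<lambda>x. min (f x - s) 0)" for s
  have gpC: "gp s \<in> CP X P" for s unfolding gp_def
    by (rule CP_un[OF P f]) (intro continuous_intros)
  have gnC: "gn s \<in> CP X P" for s unfolding gn_def
    by (rule CP_un[OF P f]) (intro continuous_intros)
  have dich: "gp s \<in> M \<or> gn s \<in> M" for s
  proof -
    have "(\<lambda>x. gp s x * gn s x) = (\<lambda>_. 0)" by (auto simp: fun_eq_iff gp_def gn_def lift_def)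
    then have "(\<lambda>x. gp s x * gn s x) \<in> M" using pideal_zero[OF Mi] by simp
    then show ?thesis using pm_prime[OF P Mi one maxl gpC gnC] by blast
  qed
  define A where "A = {s. gp s \<in> M}"
  have BA: "B \<in> A"
  proof -
    have "gp B = (\<lambda>_. 0)" using B by (force simp: fun_eq_iff gp_def lift_def abs_le_iff max_def)
    then show ?thesis unfolding A_def using pideal_zero[OF Mi] by simp
  qed
  have lowA: "- B \<le> s" if "s \<in> A" for s
  proof (rule ccontr)
    assume "\<not> - B \<le> s"
    then have "ZP X (gp s) = {}" using B by (force simp: ZP_def gp_def lift_def)
    then show False using proper_ZP[OF P Mi one] that unfolding A_def by blast
  qed
  have bdd: "bdd_below A" unfolding bdd_below_def using lowA by blast
  define r where "r = Inf A"
  have above: "gp t \<in> M" if rt: "r < t" for t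
  proof -
    obtain s where s: "s \<in> A" "s < t" using cInf_lessD[of A t] BA rt unfolding r_def by blast
    have "ZP X (gp s) \<subseteq> ZP X (gp t)" using s(2) by (auto simp: ZP_def gp_def lift_def)
    then show ?thesis using pm_z[OF P Mi one maxl _ gpC] s(1) unfolding A_def by blast
  qed
  have below: "gn t \<in> M" if "t < r" for t
  proof -
    have "t \<notin> A" using cInf_lower[OF _ bdd, of t] that unfolding r_def by force
    then show ?thesis using dich[of t] unfolding A_def by blast
  qed
  define d where "d = (\<lambda>x. f x - cst X r x)"
  have dC: "d \<in> CP X P" unfolding d_def by (rule CP_diff[OF P f CP_const[OF P]])
  show ?thesis
  proof (rule ccontr)
    assume "\<not> ?thesis"
    then have "d \<notin> M" unfolding d_def by blast
    then obtain k where k: "k \<in> CP X P" and m: "(\<lambda>x. d x * k x - one1 X x) \<in> M"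
      using pm_inv[OF P Mi one maxl dC] by blast
    obtain K0 where K0: "\<And>x. x \<in> topspace X \<Longrightarrow> \<bar>k x\<bar> \<le> K0" using pseudo_bdd[OF pc k] by blast
    define K where "K = \<bar>K0\<bar> + 1"
    have Kpos: "K > 0" unfolding K_def by simp
    have Kb: "\<bar>k x\<bar> \<le> K" if "x \<in> topspace X" for x using K0[OF that] unfolding K_def by simp
    define e where "e = 1 / (2 * K)"
    have epos: "e > 0" unfolding e_def using Kpos by simp
    have g1: "gp (r + e) \<in> M" using above epos by simp
    have g2: "gn (r - e) \<in> M" using below epos by simp
    define m' where "m' = (\<lambda>x. d x * k x - one1 X x)"
    define u1 where "u1 = (\<lambda>x. gp (r + e) x * gp (r + e) x + gn (r - e) x * gn (r - e) x)"
    have u1M: "u1 \<in> M" unfolding u1_def by (rule pideal_sq[OF Mi g1 g2])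
    define u where "u = (\<lambda>x. u1 x * u1 x + m' x * m' x)"
    have uM: "u \<in> M" unfolding u_def using pideal_sq[OF Mi u1M] m unfolding m'_def by blast
    have "ZP X u = ZP X (gp (r + e)) \<inter> ZP X (gn (r - e)) \<inter> ZP X m'"
      unfolding u_def u1_def ZP_sq by blast
    also have "\<dots> = {}"
    proof (rule ccontr)
      assume "\<dots> \<noteq> {}"
      then obtain x where x: "x \<in> topspace X" "max (f x - (r + e)) 0 = 0" "min (f x - (r - e)) 0 = 0"
        "d x * k x - 1 = 0"
        by (auto simp: ZP_def gp_def gn_def m'_def lift_def one1_def)
      have dx: "d x = f x - r" using x(1) by (simp add: d_def lift_def)
      have "\<bar>f x - r\<bar> \<le> e" using x(2,3) by (simp add: abs_le_iff max_def min_def split: if_splits)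
      then have "\<bar>d x * k x\<bar> \<le> e * K"
        unfolding dx abs_mult using Kb[OF x(1)] by (intro mult_mono) auto
      also have "e * K = 1 / 2" unfolding e_def using Kpos by simp
      finally show False using x(4) by simp
    qed
    finally show False using proper_ZP[OF P Mi one uM] by blast
  qed
qed

end

context
  fixes X :: "'a topology" and P M
  assumes P: "closed_ideal X P" and Mi: "pideal X P M" and one: "one1 X \<notin> M"
    and maxl: "\<And>J. pideal X P J \<Longrightarrow> M \<subseteq> J \<Longrightarrow> one1 X \<notin> J \<Longrightarrow> J = M"
begin

lemma pm_uniq:
  assumes "(\<lambda>x. f x - cst X r x) \<in> M" "(\<lambda>x. f x - cst X s x) \<in> M"
  shows "r = s"
proof (rule ccontr)
  assume ne: "r \<noteq> s"
  have "(\<lambda>x. (f x - cst X s x) - (f x - cst X r x)) \<in> M" by (rule pideal_diff[OF P Mi assms(2) assms(1)])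
  moreover have "ZP X (\<lambda>x. (f x - cst X s x) - (f x - cst X r x)) = {}"
    using ne by (auto simp: ZP_def lift_def)
  ultimately show False using proper_ZP[OF P Mi one] by blast
qed

lemma pm_maximal: "maximalideal M (CP_ring X P)"
proof (rule maximalidealI)
  show "ideal M (CP_ring X P)" by (rule pideal_ideal[OF P Mi])
  show "carrier (CP_ring X P) \<noteq> M" using one one1_CP[OF P Mi one maxl] by (auto simp: CP_ring_def)
  fix J assume J: "ideal J (CP_ring X P)" "M \<subseteq> J" "J \<subseteq> carrier (CP_ring X P)"
  show "J = M \<or> J = carrier (CP_ring X P)"
  proof (cases "one1 X \<in> J")
    case True
    then have "\<one>\<^bsub>CP_ring X P\<^esub> \<in> J" by (simp add: one_CP one1_def)
    then show ?thesis using ideal.one_imp_carrier[OF J(1)] by blast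
  next
    case False
    then show ?thesis using maxl[OF ideal_pideal[OF J(1)] J(2)] by blast
  qed
qed

context
  assumes pc: "tauP_pseudocompact X P"
begin

definition phi :: "('a \<Rightarrow> real) \<Rightarrow> real" where
  "phi f = (THE r. (\<lambda>x. f x - cst X r x) \<in> M)"

lemma phi_spec: "f \<in> CP X P \<Longrightarrow> (\<lambda>x. f x - cst X (phi f) x) \<in> M"
proof -
  assume f: "f \<in> CP X P"
  obtain r where r: "(\<lambda>x. f x - cst X r x) \<in> M" using pm_real[OF P Mi one maxl pc f] by blast
  show ?thesis unfolding phi_def
    by (rule theI[of "\<lambda>r. (\<lambda>x. f x - cst X r x) \<in> M" r, OF r]) (rule pm_uniq[OF _ r])
qed

lemma phi_eq: "f \<in> CP X P \<Longrightarrow> (\<lambda>x. f x - cst X r x) \<in> M \<Longrightarrow> phi f = r"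
  using phi_spec pm_uniq by blast

lemma phi_hom: "phi \<in> ring_hom (CP_ring X P) real_ring"
proof (rule ring_hom_memI)
  fix x show "phi x \<in> carrier real_ring" by (simp add: real_ring_def)
next
  fix f g assume f: "f \<in> carrier (CP_ring X P)" and g: "g \<in> carrier (CP_ring X P)"
  then have f: "f \<in> CP X P" and g: "g \<in> CP X P" by (simp_all add: CP_ring_def)
  have a: "(\<lambda>x. g x * (f x - cst X (phi f) x)) \<in> M" by (rule pideal_mult[OF Mi phi_spec[OF f] g])
  have b: "(\<lambda>x. cst X (phi f) x * (g x - cst X (phi g) x)) \<in> M"
    by (rule pideal_mult[OF Mi phi_spec[OF g] CP_const[OF P]])
  have "(\<lambda>x. g x * (f x - cst X (phi f) x) + cst X (phi f) x * (g x - cst X (phi g) x)) \<in> M"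
    by (rule pideal_add[OF Mi a b])
  moreover have "(\<lambda>x. g x * (f x - cst X (phi f) x) + cst X (phi f) x * (g x - cst X (phi g) x))
      = (\<lambda>x. f x * g x - cst X (phi f * phi g) x)"
    using CP_vanish[OF f] CP_vanish[OF g] by (auto simp: fun_eq_iff lift_def algebra_simps)
  ultimately have "(\<lambda>x. f x * g x - cst X (phi f * phi g) x) \<in> M" by simp
  then have "phi (\<lambda>x. f x * g x) = phi f * phi g" by (rule phi_eq[OF CP_mult[OF P f g]])
  then show "phi (f \<otimes>\<^bsub>CP_ring X P\<^esub> g) = phi f \<otimes>\<^bsub>real_ring\<^esub> phi g"
    by (simp add: CP_ring_def real_ring_def)
  have "(\<lambda>x. (f x - cst X (phi f) x) + (g x - cst X (phi g) x)) \<in> M"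
    by (rule pideal_add[OF Mi phi_spec[OF f] phi_spec[OF g]])
  moreover have "(\<lambda>x. (f x - cst X (phi f) x) + (g x - cst X (phi g) x))
      = (\<lambda>x. (f x + g x) - cst X (phi f + phi g) x)"
    by (auto simp: fun_eq_iff lift_def algebra_simps)
  ultimately have "(\<lambda>x. (f x + g x) - cst X (phi f + phi g) x) \<in> M" by simp
  then have "phi (\<lambda>x. f x + g x) = phi f + phi g" by (rule phi_eq[OF CP_add[OF P f g]])
  then show "phi (f \<oplus>\<^bsub>CP_ring X P\<^esub> g) = phi f \<oplus>\<^bsub>real_ring\<^esub> phi g"
    by (simp add: CP_ring_def real_ring_def)
next
  have "(\<lambda>x. one1 X x - cst X 1 x) = (\<lambda>_. 0)" by (simp add: one1_def lift_def)
  then have "(\<lambda>x. one1 X x - cst X 1 x) \<in> M" using pideal_zero[OF Mi] by simp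
  then have "phi (one1 X) = 1" using phi_eq[OF one1_CP[OF P Mi one maxl]] by blast
  then show "phi \<one>\<^bsub>CP_ring X P\<^esub> = \<one>\<^bsub>real_ring\<^esub>" by (simp add: one_CP one1_def real_ring_def)
qed

lemma phi_surj: "phi ` carrier (CP_ring X P) = carrier real_ring"
proof -
  have "r \<in> phi ` CP X P" for r
  proof -
    have "(\<lambda>x. cst X r x - cst X r x) \<in> M" using pideal_zero[OF Mi] by simp
    then have "phi (cst X r) = r" by (rule phi_eq[OF CP_const[OF P]])
    then show ?thesis using CP_const[OF P, of r] by (metis image_eqI)
  qed
  then show ?thesis by (auto simp: CP_ring_def real_ring_def)
qed

lemma phi_kernel: "a_kernel (CP_ring X P) real_ring phi = M"
proof -
  have "f \<in> M \<longleftrightarrow> phi f = 0" if f: "f \<in> CP X P" for f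
  proof
    assume "f \<in> M"
    moreover have "(\<lambda>x. f x - cst X 0 x) = f" by (simp add: lift_def)
    ultimately show "phi f = 0" using phi_eq[OF f, of 0] by simp
  next
    assume "phi f = 0"
    then have "(\<lambda>x. f x - cst X 0 x) \<in> M" using phi_spec[OF f] by simp
    moreover have "(\<lambda>x. f x - cst X 0 x) = f" by (simp add: lift_def)
    ultimately show "f \<in> M" by simp
  qed
  then show ?thesis using pideal_sub[OF Mi]
    by (auto simp: a_kernel_def' CP_ring_def real_ring_def)
qed

lemma pm_real_maximal: "real_maximal_ideal X P M"
  unfolding real_maximal_ideal_def
proof
  show "maximalideal M (CP_ring X P)" by (rule pm_maximal)
  have rh: "ring_hom_ring (CP_ring X P) real_ring phi"
    by (rule ring_hom_ringI2[OF cring.axioms(1)[OF CP_cring[OF P]] cring.axioms(1)[OF real_ring_cring] phi_hom])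
  show "CP_ring X P Quot M \<simeq> real_ring"
    using ring_hom_ring.FactRing_iso[OF rh phi_surj] phi_kernel by simp
qed

end
end

lemma ZP_sub: "ZP X f \<subseteq> topspace X" unfolding ZP_def by auto

lemma compact_realcompact:
  assumes P: "closed_ideal X P" and C: "tauP_compact X P"
  shows "tauP_realcompact X P"
  unfolding tauP_realcompact_def
proof (intro allI impI)
  fix M assume "real_maximal_ideal X P M"
  then have mx: "maximalideal M (CP_ring X P)" unfolding real_maximal_ideal_def by blast
  then have id: "ideal M (CP_ring X P)" by (rule maximalideal.axioms(1))
  have Mi: "pideal X P M" by (rule ideal_pideal[OF id])
  have one: "one1 X \<notin> M"
  proof
    assume "one1 X \<in> M"
    then have "\<one>\<^bsub>CP_ring X P\<^esub> \<in> M" by (simp add: one_CP one1_def)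
    then have "M = carrier (CP_ring X P)" by (rule ideal.one_imp_carrier[OF id])
    then show False using maximalideal.I_notcarr[OF mx] by simp
  qed
  have "ZP X ` M \<subseteq> ZP X ` CP X P" using pideal_sub[OF Mi] by blast
  moreover have "ZP X ` M \<noteq> {}" using pideal_zero[OF Mi] by blast
  moreover have "fip (ZP X ` M)" by (rule pideal_fip[OF P Mi one])
  ultimately have "\<Inter>(ZP X ` M) \<noteq> {}" using C unfolding tauP_compact_def by blast
  then show "fixed_ideal X M" unfolding fixed_ideal_def .
qed

lemma compact_pseudo:
  assumes P: "closed_ideal X P" and C: "tauP_compact X P"
  shows "tauP_pseudocompact X P"
  unfolding tauP_pseudocompact_def CP_bdd_def
proof (rule antisym)
  show "CP X P \<subseteq> {f \<in> CP X P. \<exists>B. \<forall>x\<in>topspace X. \<bar>f x\<bar> \<le> B}"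
  proof
    fix f assume f: "f \<in> CP X P"
    show "f \<in> {f \<in> CP X P. \<exists>B. \<forall>x\<in>topspace X. \<bar>f x\<bar> \<le> B}"
    proof (rule ccontr)
      assume "\<not> ?thesis"
      then have unb: "\<And>B. \<exists>x\<in>topspace X. B < \<bar>f x\<bar>" using f by (auto simp: not_le)
      define g where "g n = lift X (\<lambda>x. min 0 (\<bar>f x\<bar> - real n))" for n :: nat
      have gC: "g n \<in> CP X P" for n unfolding g_def
        by (rule CP_un[OF P f]) (intro continuous_intros)
      define Z where "Z n = ZP X (g n)" for n
      have Zeq: "Z n = {x \<in> topspace X. real n \<le> \<bar>f x\<bar>}" for n
        by (auto simp: Z_def ZP_def g_def lift_def min_def)
      define F where "F = range Z"
      have FZ: "F \<subseteq> ZP X ` CP X P" unfolding F_def Z_def using gC by blast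
      have Fne: "F \<noteq> {}" unfolding F_def by blast
      have Ffip: "fip F" unfolding fip_def
      proof (intro allI impI)
        fix G assume G: "G \<subseteq> F \<and> finite G \<and> G \<noteq> {}"
        then obtain N where N: "N \<subseteq> UNIV" "finite N" "G = Z ` N"
          unfolding F_def using finite_subset_image by metis
        define m where "m = Max N"
        have sub: "Z m \<subseteq> \<Inter>G"
        proof
          fix x assume x: "x \<in> Z m"
          have "x \<in> Z n" if n: "n \<in> N" for n
          proof -
            have "real n \<le> real m" unfolding m_def using Max_ge[OF N(2) n] by simp
            then show ?thesis using x unfolding Zeq by auto
          qed
          then show "x \<in> \<Inter>G" using N(3) by auto
        qed
        obtain x where "x \<in> topspace X" "real m < \<bar>f x\<bar>" using unb by blast
        then have "x \<in> Z m" unfolding Zeq by auto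
        then show "\<Inter>G \<noteq> {}" using sub by blast
      qed
      have "\<Inter>F = {}"
      proof (rule ccontr)
        assume "\<Inter>F \<noteq> {}"
        then obtain x where x: "\<And>n. x \<in> Z n" unfolding F_def by blast
        obtain n :: nat where "\<bar>f x\<bar> < real n" using reals_Archimedean2 by blast
        then show False using x[of n] unfolding Zeq by auto
      qed
      then show False using C FZ Fne Ffip unfolding tauP_compact_def by blast
    qed
  qed
qed auto

lemma ZP_zero: "ZP X (\<lambda>_. 0) = topspace X" unfolding ZP_def by auto
lemma ZP_one1: "ZP X (one1 X) = {}" unfolding ZP_def one1_def lift_def by auto

lemma pseudo_real_compact:
  assumes P: "closed_ideal X P" and pc: "tauP_pseudocompact X P" and rc: "tauP_realcompact X P"
  shows "tauP_compact X P"
  unfolding tauP_compact_def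
proof (intro allI impI)
  fix F assume asm: "F \<subseteq> ZP X ` CP X P \<and> F \<noteq> {} \<and> fip F"
  then have FZ: "F \<subseteq> ZP X ` CP X P" and Fne: "F \<noteq> {}" and Ffip: "fip F" by auto
  show "\<Inter>F \<noteq> {}"
  proof
    assume empty: "\<Inter>F = {}"
    define I0 where "I0 = {g \<in> CP X P. \<exists>G. finite G \<and> G \<noteq> {} \<and> G \<subseteq> F \<and> \<Inter>G \<subseteq> ZP X g}"
    have I0I: "g \<in> I0" if "g \<in> CP X P" "finite G" "G \<noteq> {}" "G \<subseteq> F" "\<Inter>G \<subseteq> ZP X g" for g G
      unfolding I0_def using that by blast
    have FT: "Z \<subseteq> topspace X" if ZF: "Z \<in> F" for Z
    proof -
      obtain f where "Z = ZP X f" using FZ ZF by blast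
      then show ?thesis by (simp add: ZP_sub)
    qed
    have pI0: "pideal X P I0"
      unfolding pideal_def
    proof (intro conjI ballI)
      show "I0 \<subseteq> CP X P" unfolding I0_def by blast
      obtain Z where Z: "Z \<in> F" using Fne by blast
      show "(\<lambda>_. 0) \<in> I0"
        by (rule I0I[of _ "{Z}"]) (use CP_zero[OF P] Z FT[OF Z] in \<open>auto simp: ZP_zero\<close>)
      fix a assume "a \<in> I0"
      then obtain Ga where a: "a \<in> CP X P" "finite Ga" "Ga \<noteq> {}" "Ga \<subseteq> F" "\<Inter>Ga \<subseteq> ZP X a"
        unfolding I0_def by blast
      { fix b assume "b \<in> I0"
        then obtain Gb where b: "b \<in> CP X P" "finite Gb" "Gb \<noteq> {}" "Gb \<subseteq> F" "\<Inter>Gb \<subseteq> ZP X b"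
          unfolding I0_def by blast
        have "\<Inter>(Ga \<union> Gb) \<subseteq> \<Inter>Ga \<inter> \<Inter>Gb" by blast
        also have "\<dots> \<subseteq> ZP X a \<inter> ZP X b" using a(5) b(5) by blast
        also have "\<dots> \<subseteq> ZP X (\<lambda>x. a x + b x)" by (auto simp: ZP_def)
        finally have "\<Inter>(Ga \<union> Gb) \<subseteq> ZP X (\<lambda>x. a x + b x)" .
        then show "(\<lambda>x. a x + b x) \<in> I0"
          using I0I[OF CP_add[OF P a(1) b(1)], of "Ga \<union> Gb"] a(2,3,4) b(2,3,4) by blast }
      { fix r assume r: "r \<in> CP X P"
        have "\<Inter>Ga \<subseteq> ZP X (\<lambda>x. r x * a x)" using a(5) by (auto simp: ZP_def)
        then show "(\<lambda>x. r x * a x) \<in> I0"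
          by (rule I0I[OF CP_mult[OF P r a(1)] a(2,3,4)]) }
    qed
    have oneI0: "one1 X \<notin> I0"
    proof
      assume "one1 X \<in> I0"
      then obtain G where G: "finite G" "G \<noteq> {}" "G \<subseteq> F" "\<Inter>G \<subseteq> ZP X (one1 X)"
        unfolding I0_def by blast
      then have "\<Inter>G = {}" using ZP_one1[of X] by blast
      then show False using Ffip G unfolding fip_def by blast
    qed
    define S where "S = {J. pideal X P J \<and> I0 \<subseteq> J \<and> one1 X \<notin> J}"
    have Sne: "S \<noteq> {}" using pI0 oneI0 unfolding S_def by blast
    have chain: "\<Union>C \<in> S" if C: "C \<noteq> {}" "subset.chain S C" for C
    proof -
      have CS: "C \<subseteq> S" and lin: "\<And>J1 J2. J1 \<in> C \<Longrightarrow> J2 \<in> C \<Longrightarrow> J1 \<subseteq> J2 \<or> J2 \<subseteq> J1"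
        using C(2) unfolding subset.chain_def by blast+
      have pj: "pideal X P J" if "J \<in> C" for J using CS that unfolding S_def by blast
      obtain J0 where J0: "J0 \<in> C" using C(1) by blast
      have "pideal X P (\<Union>C)"
        unfolding pideal_def
      proof (intro conjI ballI)
        show "\<Union>C \<subseteq> CP X P" using pideal_sub[OF pj] by blast
        show "(\<lambda>_. 0) \<in> \<Union>C" using pideal_zero[OF pj[OF J0]] J0 by blast
        fix a assume "a \<in> \<Union>C"
        then obtain Ja where Ja: "Ja \<in> C" "a \<in> Ja" by blast
        { fix b assume "b \<in> \<Union>C"
          then obtain Jb where Jb: "Jb \<in> C" "b \<in> Jb" by blast
          show "(\<lambda>x. a x + b x) \<in> \<Union>C"
          proof (cases "Ja \<subseteq> Jb")
            case True
            then show ?thesis using pideal_add[OF pj[OF Jb(1)], of a b] Ja Jb by blast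
          next
            case False
            then have "Jb \<subseteq> Ja" using lin[OF Ja(1) Jb(1)] by blast
            then show ?thesis using pideal_add[OF pj[OF Ja(1)], of a b] Ja Jb by blast
          qed }
        { fix r assume r: "r \<in> CP X P"
          show "(\<lambda>x. r x * a x) \<in> \<Union>C" using pideal_mult[OF pj[OF Ja(1)] Ja(2) r] Ja(1) by blast }
      qed
      moreover have "I0 \<subseteq> \<Union>C" using J0 CS unfolding S_def by blast
      moreover have "one1 X \<notin> \<Union>C" using CS unfolding S_def by blast
      ultimately show ?thesis unfolding S_def by blast
    qed
    obtain M where M: "M \<in> S" and Mmax: "\<And>J. J \<in> S \<Longrightarrow> M \<subseteq> J \<Longrightarrow> J = M"
      using subset_Zorn_nonempty[OF Sne chain] by blast
    have Mi: "pideal X P M" and I0M: "I0 \<subseteq> M" and one: "one1 X \<notin> M" using M unfolding S_def by auto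
    have maxl: "J = M" if "pideal X P J" "M \<subseteq> J" "one1 X \<notin> J" for J
      using Mmax[of J] that I0M unfolding S_def by blast
    have "real_maximal_ideal X P M" by (rule pm_real_maximal[OF P Mi one maxl pc])
    then have "fixed_ideal X M" using rc unfolding tauP_realcompact_def by blast
    then obtain x where x: "\<And>g. g \<in> M \<Longrightarrow> x \<in> ZP X g" unfolding fixed_ideal_def by blast
    obtain Z where Z: "Z \<in> F" "x \<notin> Z" using empty by blast
    obtain f where f: "f \<in> CP X P" "Z = ZP X f" using FZ Z(1) by blast
    have "f \<in> I0" by (rule I0I[of f "{Z}"]) (use f Z in auto)
    then have "x \<in> ZP X f" using x I0M by blast
    then show False using Z f by blast
  qed
qed

theorem theorem4p10:
  fixes X :: "'a topology" and P :: "'a set set"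
  assumes "t1_space X" and "closed_ideal X P"
  shows "tauP_compact X P \<longleftrightarrow> tauP_pseudocompact X P \<and> tauP_realcompact X P"
  using compact_pseudo[OF assms(2)] compact_realcompact[OF assms(2)] pseudo_real_compact[OF assms(2)]
  by blast

end
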